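(* A circular net $f:\mathbb Z^m\to\mathbb R^N$ (in general position) is discrete isothermic if and only if there exists a real-valued edge labelling $(\alpha_1,\dots,\alpha_m)$ of $\mathbb Z^m$ such that for every $u$ and $i\ne j$, $$q(f,f_i,f_{ij},f_j)=\frac{\alpha_i}{\alpha_j}.$$
   Context: Notation: for $f:\mathbb Z^m\to\mathbb R^N$, $f=f(u)$, $f_i=f(u+e_i)$, $f_{ij}=f(u+e_i+e_j)$ with $e_i$ the unit vectors. A Q-net is a map such that each elementary quadrilateral $(f,f_i,f_{ij},f_j)$ ($i\ne j$) is planar, assumed non-degenerate (distinct vertices, no three collinear, diagonals meeting in a point distinct from the vertices). Two planar quadrilaterals $(A,B,C,D)$, $(A^*,B^*,C^*,D^* )$ are dual if $A^*B^*\parallel AB$, $B^*C^*\parallel BC$, $C^*D^*\parallel CD$, $D^*A^*\parallel DA$, $A^*C^*\parallel BD$, $B^*D^*\parallel AC$. A Q-net $f$ is a discrete Koenigs net if there is a Q-net $f^*$ with every $(f^*,f^*_i,f^*_{ij},f^*_j)$ dual to $(f,f_i,f_{ij},f_j)$. A circular net is a Q-net all of whose elementary quadrilaterals have their four vertices on a circle. A discrete isothermic net is a circular net which is a discrete Koenigs net. For four concircular points $a,b,c,d\in\mathbb R^N$, their cross-ratio is $q(a,b,c,d)=(a-b)(b-c)^{-1}(c-d)(d-a)^{-1}$, computed after identifying a $2$-plane containing them with $\mathbb C$; it is real. An edge labelling is a system of real functions $\alpha_i$ ($i=1,\dots,m$) on the edges of $\mathbb Z^m$ parallel to the $i$-th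 axis, taking equal values on opposite edges of every elementary square; equivalently, $\alpha_i(u)$ (the value on the edge $(u,u+e_i)$) depends only on $u_i$. *)

theory Defs
  imports "HOL-Analysis.Analysis"
begin

text \<open>Lattice points of Z^m are functions from a finite index type 'm to int.
  The shift u + e_i:\<close>
definition shift :: "('m \<Rightarrow> int) \<Rightarrow> 'm \<Rightarrow> ('m \<Rightarrow> int)" where
  "shift u i = u(i := u i + 1)"

definition nondeg_planar_quad :: "'a::euclidean_space \<Rightarrow> 'a \<Rightarrow> 'a \<Rightarrow> 'a \<Rightarrow> bool" where
  "nondeg_planar_quad A B C D \<longleftrightarrow>
     aff_dim {A, B, C, D} \<le> 2 \<and>
     distinct [A, B, C, D] \<and>
     \<not> collinear {A, B, C} \<and> \<not> collinear {A, B, D} \<and>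
     \<not> collinear {A, C, D} \<and> \<not> collinear {B, C, D} \<and>
     (\<exists>P. P \<in> affine hull {A, C} \<and> P \<in> affine hull {B, D} \<and> P \<notin> {A, B, C, D})"

definition qnet :: "(('m::finite \<Rightarrow> int) \<Rightarrow> 'a::euclidean_space) \<Rightarrow> bool" where
  "qnet f \<longleftrightarrow> (\<forall>u i j. i \<noteq> j \<longrightarrow>
      nondeg_planar_quad (f u) (f (shift u i)) (f (shift (shift u i) j)) (f (shift u j)))"

definition parallel_vec :: "'a::real_vector \<Rightarrow> 'a \<Rightarrow> bool" where
  "parallel_vec x y \<longleftrightarrow> (\<exists>c. x = c *\<^sub>R y) \<or> (\<exists>c. y = c *\<^sub>R x)"

definition dual_quad :: "'a::real_vector \<Rightarrow> 'a \<Rightarrow> 'a \<Rightarrow> 'a \<Rightarrow> 'a \<Rightarrow> 'a \<Rightarrow> 'a \<Rightarrow> 'a \<Rightarrow> bool" where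
  "dual_quad A B C D A' B' C' D' \<longleftrightarrow>
     parallel_vec (B' - A') (B - A) \<and> parallel_vec (C' - B') (C - B) \<and>
     parallel_vec (D' - C') (D - C) \<and> parallel_vec (A' - D') (A - D) \<and>
     parallel_vec (C' - A') (D - B) \<and> parallel_vec (D' - B') (C - A)"

definition koenigs_net :: "(('m::finite \<Rightarrow> int) \<Rightarrow> 'a::euclidean_space) \<Rightarrow> bool" where
  "koenigs_net f \<longleftrightarrow> qnet f \<and>
     (\<exists>g :: ('m \<Rightarrow> int) \<Rightarrow> 'a. qnet g \<and>
        (\<forall>u i j. i \<noteq> j \<longrightarrow>
           dual_quad (f u) (f (shift u i)) (f (shift (shift u i) j)) (f (shift u j))
                     (g u) (g (shift u i)) (g (shift (shift u i) j)) (g (shift u j))))"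

text \<open>Four points lie on a circle: they lie on a sphere whose centre is in their affine hull
  (together with planarity of the quadrilateral this is the usual notion).\<close>
definition concircular :: "'a::euclidean_space \<Rightarrow> 'a \<Rightarrow> 'a \<Rightarrow> 'a \<Rightarrow> bool" where
  "concircular a b c d \<longleftrightarrow> aff_dim {a, b, c, d} \<le> 2 \<and>
     (\<exists>z \<in> affine hull {a, b, c, d}. dist z a = dist z b \<and> dist z a = dist z c \<and> dist z a = dist z d)"

definition circular_net :: "(('m::finite \<Rightarrow> int) \<Rightarrow> 'a::euclidean_space) \<Rightarrow> bool" where
  "circular_net f \<longleftrightarrow> qnet f \<and> (\<forall>u i j. i \<noteq> j \<longrightarrow>
      concircular (f u) (f (shift u i)) (f (shift (shift u i) j)) (f (shift u j)))"

definition isothermic_net :: "(('m::finite \<Rightarrow> int) \<Rightarrow> 'a::euclidean_space) \<Rightarrow> bool" where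
  "isothermic_net f \<longleftrightarrow> circular_net f \<and> koenigs_net f"

text \<open>Cross-ratio q(a,b,c,d) = (a-b)(b-c)^{-1}(c-d)(d-a)^{-1}, computed after identifying
  a 2-plane containing the points with C via an isometric embedding of C.\<close>
definition cross_ratio :: "'a::euclidean_space \<Rightarrow> 'a \<Rightarrow> 'a \<Rightarrow> 'a \<Rightarrow> real" where
  "cross_ratio a b c d = (THE q :: real. \<exists>(\<phi> :: complex \<Rightarrow> 'a) z1 z2 z3 z4.
      (\<forall>z w. dist (\<phi> z) (\<phi> w) = dist z w) \<and>
      \<phi> z1 = a \<and> \<phi> z2 = b \<and> \<phi> z3 = c \<and> \<phi> z4 = d \<and>
      (z1 - z2) * inverse (z2 - z3) * (z3 - z4) * inverse (z4 - z1) = complex_of_real q)"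

end

theory Submission
  imports Defs
begin



definition crc :: "complex \<Rightarrow> complex \<Rightarrow> complex \<Rightarrow> complex \<Rightarrow> complex" where
  "crc a b c d = (a-b) * inverse (b-c) * (c-d) * inverse (d-a)"

lemma par_iff: "Im (x * cnj y) = 0 \<longleftrightarrow> x = 0 \<or> y = 0 \<or> (\<exists>c::real. y = c *\<^sub>R x)"
proof
  assume h: "Im (x * cnj y) = 0"
  show "x = 0 \<or> y = 0 \<or> (\<exists>c::real. y = c *\<^sub>R x)"
  proof (cases "x = 0")
    case False
    then have n: "Re x ^2 + Im x ^2 \<noteq> 0"
      by (simp add: complex_eq_iff)
    define c where "c = (Re y * Re x + Im y * Im x) / (Re x ^2 + Im x ^2)"
    have "y = c *\<^sub>R x"
      using h n unfolding c_def
      by (simp add: complex_eq_iff field_simps power2_eq_square)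
    then show ?thesis by blast
  qed simp
next
  assume "x = 0 \<or> y = 0 \<or> (\<exists>c::real. y = c *\<^sub>R x)"
  then show "Im (x * cnj y) = 0" by (auto simp: scaleR_conv_of_real)
qed

lemma collinear_complex: "collinear {x, y, z::complex} \<longleftrightarrow> Im ((y - x) * cnj (z - x)) = 0"
proof -
  have "collinear {x,y,z} = collinear {y,x,z}" by (simp add: insert_commute)
  also have "\<dots> = collinear {0, y - x, z - x}" by (rule collinear_3) simp
  also have "\<dots> \<longleftrightarrow> Im ((y - x) * cnj (z - x)) = 0" unfolding collinear_lemma par_iff by simp
  finally show ?thesis .
qed

definition CRv :: "'a::real_inner \<Rightarrow> 'a \<Rightarrow> 'a \<Rightarrow> 'a \<Rightarrow> real" where
  "CRv a b c d = ((inner (a-b) (b-c)) * (inner (c-d) (d-a)) - (inner (a-b) (c-d)) * (inner (b-c) (d-a))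
      + (inner (a-b) (d-a)) * (inner (c-d) (b-c))) / ((inner (b-c) (b-c)) * (inner (d-a) (d-a)))"

lemma inner_dist4:
  fixes p q r s :: "'a::real_inner"
  shows "inner (p - q) (r - s) = ((dist p s)^2 + (dist q r)^2 - (dist p r)^2 - (dist q s)^2) / 2"
  by (simp add: dist_norm power2_norm_eq_inner inner_diff_left inner_diff_right inner_commute algebra_simps)

lemma CRv_iso:
  assumes "\<And>z w. dist (\<psi> z) (\<psi> w) = dist z w"
  shows "CRv (\<psi> a) (\<psi> b) (\<psi> c) (\<psi> (d::'b::real_inner) :: 'a::real_inner) = CRv a b c d"
  unfolding CRv_def inner_dist4 assms ..

lemma Re_crc: "Re (crc a b c d) = CRv a b c d"
proof -
  define u where "u = a - b"
  define w where "w = b - c"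
  define v where "v = c - d"
  define x where "x = d - a"
  have "crc a b c d = u * inverse w * v * inverse x" unfolding crc_def u_def w_def v_def x_def ..
  moreover have "CRv a b c d = ((inner u w) * (inner v x) - (inner u v) * (inner w x)
      + (inner u x) * (inner v w)) / ((inner w w) * (inner x x))"
    unfolding CRv_def u_def w_def v_def x_def ..
  moreover have "Re (u * inverse w * v * inverse x) = Re (u * v / (w * x))" by (simp add: field_simps)
  moreover have "Re (u * v / (w * x)) = (Re (u * v) * Re (w*x) + Im (u * v) * Im (w*x)) / ((Re (w*x))^2 + (Im (w*x))^2)"
    by (simp add: Re_divide power2_eq_square)
  moreover have "Re (u * v) * Re (w*x) + Im (u * v) * Im (w*x) = (inner u w) * (inner v x) - (inner u v) * (inner w x)
      + (inner u x) * (inner v w)"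
    by (simp add: inner_complex_def algebra_simps)
  moreover have "(Re (w*x))^2 + (Im (w*x))^2 = (inner w w) * (inner x x)"
    by (simp add: inner_complex_def algebra_simps power2_eq_square)
  ultimately show ?thesis by simp
qed

lemma aux_frac:
  fixes R a b c d X Y Z W :: complex
  assumes "R \<noteq> 0" "a \<noteq> 0" "b \<noteq> 0" "c \<noteq> 0" "d \<noteq> 0" "Y \<noteq> 0" "W \<noteq> 0"
  shows "(R*X/(a*b)) * inverse (R*Y/(b*c)) * (R*Z/(c*d)) * inverse (R*W/(d*a)) = (X*Z)/(Y*W)"
  using assms by (simp add: inverse_divide)

lemma crc_real:
  assumes "cmod (a - z) = r" "cmod (b - z) = r" "cmod (c - z) = r" "cmod (d - z) = r"
    and "distinct [a,b,c,d]"
  shows "crc a b c d = complex_of_real (Re (crc a b c d))"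
proof -
  define a' where "a' = a - z"
  define b' where "b' = b - z"
  define c' where "c' = c - z"
  define d' where "d' = d - z"
  have r: "r \<noteq> 0" using assms by auto
  have inv: "cnj p = complex_of_real (r^2) / p" if "cmod p = r" for p
  proof -
    have "p \<noteq> 0" using that r by auto
    moreover have "complex_of_real (r^2) = p * cnj p" using complex_norm_square[of p] that by simp
    ultimately show ?thesis by (simp add: field_simps)
  qed
  have e: "crc a b c d = (a'-b') * inverse (b'-c') * (c'-d') * inverse (d'-a')"
    unfolding crc_def a'_def b'_def c'_def d'_def by simp
  have ne: "a' \<noteq> 0" "b' \<noteq> 0" "c' \<noteq> 0" "d' \<noteq> 0" "a' \<noteq> b'" "b' \<noteq> c'" "c' \<noteq> d'" "d' \<noteq> a'"
     "a' \<noteq> c'" "b' \<noteq> d'"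
    using assms r unfolding a'_def b'_def c'_def d'_def by auto
  have ca: "cnj a' = complex_of_real (r^2) / a'" unfolding a'_def by (rule inv[OF assms(1)])
  have cb: "cnj b' = complex_of_real (r^2) / b'" unfolding b'_def by (rule inv[OF assms(2)])
  have cc: "cnj c' = complex_of_real (r^2) / c'" unfolding c'_def by (rule inv[OF assms(3)])
  have cd: "cnj d' = complex_of_real (r^2) / d'" unfolding d'_def by (rule inv[OF assms(4)])
  define R where "R = complex_of_real (r^2)"
  have R: "R \<noteq> 0" using r unfolding R_def by simp
  have cd2: "cnj (p - q) = R * (q - p) / (p * q)" if "cnj p = R / p" "cnj q = R / q" "p \<noteq> 0" "q \<noteq> 0" for p q
    using that by (simp add: field_simps)
  have ne2: "a' - b' \<noteq> 0" "b' - c' \<noteq> 0" "c' - d' \<noteq> 0" "d' - a' \<noteq> 0" using ne by auto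
  have ne3: "c' - b' \<noteq> 0" "a' - d' \<noteq> 0" using ne by auto
  have "cnj (crc a b c d) = (R*(b'-a')/(a'*b')) * inverse (R*(c'-b')/(b'*c')) * (R*(d'-c')/(c'*d')) * inverse (R*(a'-d')/(d'*a'))"
  proof -
    have 1: "cnj (a'-b') = R*(b'-a')/(a'*b')" by (rule cd2) (use ca cb ne R_def in auto)
    have 2: "cnj (b'-c') = R*(c'-b')/(b'*c')" by (rule cd2) (use cc cb ne R_def in auto)
    have 3: "cnj (c'-d') = R*(d'-c')/(c'*d')" by (rule cd2) (use cc cd ne R_def in auto)
    have 4: "cnj (d'-a') = R*(a'-d')/(d'*a')" by (rule cd2) (use ca cd ne R_def in auto)
    show ?thesis unfolding e complex_cnj_mult complex_cnj_inverse 1 2 3 4 ..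
  qed
  also have "\<dots> = ((b'-a')*(d'-c')) / ((c'-b')*(a'-d'))"
    using ne ne2 ne3 R by (intro aux_frac) auto
  also have "\<dots> = ((a'-b')*(c'-d')) / ((b'-c')*(d'-a'))"
    by (simp add: algebra_simps)
  also have "\<dots> = (a'-b') * inverse (b'-c') * (c'-d') * inverse (d'-a')"
    by (simp add: field_simps)
  finally have "cnj (crc a b c d) = crc a b c d" using e by simp
  then show ?thesis by (simp add: complex_eq_iff)
qed




lemma cross_ratio_eq:
  fixes A B C D :: "'a::euclidean_space"
  assumes iso: "\<And>z w. dist (\<phi> z) (\<phi> w) = dist z w"
    and h: "\<phi> z1 = A" "\<phi> z2 = B" "\<phi> z3 = C" "\<phi> z4 = D"
    and q: "crc z1 z2 z3 z4 = complex_of_real q"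
  shows "cross_ratio A B C D = q"
proof -
  have cr: "CRv A B C D = q"
  proof -
    have "CRv A B C D = CRv (\<phi> z1) (\<phi> z2) (\<phi> z3) (\<phi> z4)" using h by simp
    also have "\<dots> = CRv z1 z2 z3 z4" by (rule CRv_iso) (rule iso)
    also have "\<dots> = Re (crc z1 z2 z3 z4)" by (simp add: Re_crc)
    finally show ?thesis using q by simp
  qed
  show ?thesis unfolding cross_ratio_def
  proof (rule the_equality)
    show "\<exists>\<phi> z1 z2 z3 z4. (\<forall>z w. dist (\<phi> z) (\<phi> w) = dist z w) \<and> \<phi> z1 = A \<and> \<phi> z2 = B \<and> \<phi> z3 = C \<and> \<phi> z4 = D \<and>
      (z1 - z2) * inverse (z2 - z3) * (z3 - z4) * inverse (z4 - z1) = complex_of_real q"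
      apply (rule exI[of _ \<phi>], rule exI[of _ z1], rule exI[of _ z2], rule exI[of _ z3], rule exI[of _ z4])
      using iso h q unfolding crc_def by simp
  next
    fix q'
    assume "\<exists>\<psi> w1 w2 w3 w4. (\<forall>z w. dist (\<psi> z) (\<psi> w :: 'a) = dist z w) \<and> \<psi> w1 = A \<and> \<psi> w2 = B \<and> \<psi> w3 = C \<and> \<psi> w4 = D \<and>
      (w1 - w2) * inverse (w2 - w3) * (w3 - w4) * inverse (w4 - w1) = complex_of_real q'"
    then obtain \<psi> w1 w2 w3 w4 where i2: "\<And>z w. dist (\<psi> z) (\<psi> w :: 'a) = dist z w"
      and h2: "\<psi> w1 = A" "\<psi> w2 = B" "\<psi> w3 = C" "\<psi> w4 = D"
      and q2: "crc w1 w2 w3 w4 = complex_of_real q'" unfolding crc_def by blast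
    have "CRv A B C D = CRv (\<psi> w1) (\<psi> w2) (\<psi> w3) (\<psi> w4)" using h2 by simp
    also have "\<dots> = CRv w1 w2 w3 w4" by (rule CRv_iso) (rule i2)
    also have "\<dots> = Re (crc w1 w2 w3 w4)" by (simp add: Re_crc)
    finally show "q' = q" using q2 cr by simp
  qed
qed

definition Lm :: "'a::real_vector \<Rightarrow> 'a \<Rightarrow> complex \<Rightarrow> 'a" where
  "Lm e1 e2 z = Re z *\<^sub>R e1 + Im z *\<^sub>R e2"

definition orthn :: "'a::real_inner \<Rightarrow> 'a \<Rightarrow> bool" where
  "orthn e1 e2 \<longleftrightarrow> inner e1 e1 = 1 \<and> inner e2 e2 = 1 \<and> inner e1 e2 = 0"

lemma Lm_add: "Lm e1 e2 (z + w) = Lm e1 e2 z + Lm e1 e2 w"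
  by (simp add: Lm_def algebra_simps scaleR_add_left)
lemma Lm_diff: "Lm e1 e2 (z - w) = Lm e1 e2 z - Lm e1 e2 w"
  by (simp add: Lm_def algebra_simps scaleR_diff_left)
lemma Lm_scaleR: "Lm e1 e2 (c *\<^sub>R z) = c *\<^sub>R Lm e1 e2 z"
  by (simp add: Lm_def algebra_simps)
lemma Lm_zero[simp]: "Lm e1 e2 0 = 0"
  by (simp add: Lm_def)

lemma Lm_inner:
  assumes "orthn e1 e2"
  shows "inner (Lm e1 e2 z) (Lm e1 e2 w) = inner z w"
  using assms unfolding Lm_def orthn_def inner_complex_def
  by (simp add: inner_add_left inner_add_right inner_commute algebra_simps)

lemma Lm_norm:
  assumes "orthn e1 e2"
  shows "norm (Lm e1 e2 z) = norm z"
  using Lm_inner[OF assms, of z z] by (simp add: norm_eq_sqrt_inner)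

lemma Lm_dist:
  assumes "orthn e1 e2"
  shows "dist (P + Lm e1 e2 z) (P + Lm e1 e2 w) = dist z w"
  using Lm_norm[OF assms, of "z - w"] by (simp add: dist_norm Lm_diff)

lemma Lm_inj:
  assumes "orthn e1 e2" "Lm e1 e2 z = Lm e1 e2 w"
  shows "z = w"
  using Lm_norm[OF assms(1), of "z - w"] assms(2) by (simp add: Lm_diff)

lemma collinear_Lm:
  assumes "orthn e1 e2"
  shows "collinear {P + Lm e1 e2 x, P + Lm e1 e2 y, P + Lm e1 e2 z} \<longleftrightarrow> collinear {x, y, z}"
proof -
  let ?L = "Lm e1 e2"
  have "collinear {P + ?L x, P + ?L y, P + ?L z} = collinear {P + ?L y, P + ?L x, P + ?L z}"
    by (simp add: insert_commute)
  also have "\<dots> = collinear {0, ?L (y - x), ?L (z - x)}"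
    by (subst collinear_3) (auto simp: Lm_diff)
  also have "\<dots> = (y - x = 0 \<or> z - x = 0 \<or> (\<exists>c. z - x = c *\<^sub>R (y - x)))"
  proof -
    have i: "\<And>u v. ?L u = ?L v \<longleftrightarrow> u = v" using Lm_inj[OF assms] by blast
    have i0: "\<And>u. ?L u = 0 \<longleftrightarrow> u = 0" using i[of _ 0] by simp
    have i1: "\<And>c. ?L (z - x) = c *\<^sub>R ?L (y - x) \<longleftrightarrow> z - x = c *\<^sub>R (y - x)"
      using i by (simp add: Lm_scaleR[symmetric])
    show ?thesis unfolding collinear_lemma i0 i1 ..
  qed
  also have "\<dots> = collinear {0, y - x, z - x}" unfolding collinear_lemma ..
  also have "\<dots> = collinear {y, x, z}" by (subst collinear_3) auto
  also have "\<dots> = collinear {x, y, z}" by (simp add: insert_commute)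
  finally show ?thesis .
qed




definition sc :: "real \<Rightarrow> complex \<Rightarrow> complex" where
  "sc r z = (r / (cmod z)^2) *\<^sub>R z"

lemma sc_eq: "z \<noteq> 0 \<Longrightarrow> sc r z = complex_of_real r / cnj z"
proof -
  assume z: "z \<noteq> 0"
  have "complex_of_real ((cmod z)^2) = z * cnj z" by (rule complex_norm_square)
  then show ?thesis using z unfolding sc_def scaleR_conv_of_real
    by (simp add: field_simps)
qed

lemma cnj_sc: "z \<noteq> 0 \<Longrightarrow> cnj (sc r z) = complex_of_real r / z"
  by (simp add: sc_eq)

lemma gen_ids:
  fixes p r s t u v B :: complex
  assumes nz: "p \<noteq> 0" "r \<noteq> 0" "s \<noteq> 0" "t \<noteq> 0" "u \<noteq> 0" "v \<noteq> 0"
    and ht: "t = p + r + s" and hu: "u = p + r" and hv: "v = r + s"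
  shows "(-(p * s)/(r * t)) * B/p + B/r = B/t + (-(p * s)/(r * t)) * B/(-s)"
    and "(-(p * s)/(r * t)) * B/p + B/r = B * (1-(-(p * s)/(r * t)))/v"
    and "B/t - (-(p * s)/(r * t)) * B/p = B * (1-(-(p * s)/(r * t)))/u"
proof -
  show "(-(p * s)/(r * t)) * B/p + B/r = B/t + (-(p * s)/(r * t)) * B/(-s)"
    using nz(1-4) by (simp add: field_simps) (simp add: ht algebra_simps)
  show "(-(p * s)/(r * t)) * B/p + B/r = B * (1-(-(p * s)/(r * t)))/v"
    using nz(1-4,6) by (simp add: field_simps) (simp add: ht hv algebra_simps)
  show "B/t - (-(p * s)/(r * t)) * B/p = B * (1-(-(p * s)/(r * t)))/u"
    using nz(1-5) by (simp add: field_simps) (simp add: ht hu algebra_simps)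
qed

lemma dual_identities:
  fixes a b c d :: complex and \<alpha> \<beta> q :: real
  assumes dist: "distinct [a,b,c,d]" and hq: "crc a b c d = complex_of_real q" and ab: "\<alpha> = q * \<beta>"
  shows "sc \<alpha> (b-a) + sc \<beta> (c-b) = sc \<beta> (d-a) + sc \<alpha> (c-d)"
    and "sc \<alpha> (b-a) + sc \<beta> (c-b) = sc (\<beta>*(1-q)) (d-b)"
    and "sc \<beta> (d-a) - sc \<alpha> (b-a) = sc (\<beta>*(1-q)) (c-a)"
proof -
  have nz: "b - a \<noteq> 0" "c - b \<noteq> 0" "d - a \<noteq> 0" "c - d \<noteq> 0" "d - b \<noteq> 0" "c - a \<noteq> 0"
    "b - c \<noteq> 0" "a - d \<noteq> 0" "a - b \<noteq> 0" "d - c \<noteq> 0" "b - d \<noteq> 0" "a - c \<noteq> 0"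
    using dist by auto
  define Q where "Q = complex_of_real q"
  define p where "p = b - a"
  define r where "r = c - b"
  define s where "s = d - c"
  define t where "t = d - a"
  define u where "u = c - a"
  define v where "v = d - b"
  have nz2: "p \<noteq> 0" "r \<noteq> 0" "s \<noteq> 0" "t \<noteq> 0" "u \<noteq> 0" "v \<noteq> 0"
    using nz unfolding p_def r_def s_def t_def u_def v_def by auto
  have ht: "t = p + r + s" and hu: "u = p + r" and hv: "v = r + s"
    unfolding p_def r_def s_def t_def u_def v_def by simp_all
  have "crc a b c d = (-p) * inverse (-r) * (-s) * inverse t"
    unfolding crc_def p_def r_def s_def t_def by (simp add: minus_diff_eq)
  also have "\<dots> = -(p * s)/(r * t)" using nz2 by (simp add: field_simps)
  finally have Qd: "Q = -(p * s)/(r * t)" using hq unfolding Q_def by simp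
  define B where "B = complex_of_real \<beta>"
  have A: "complex_of_real \<alpha> = Q * B" unfolding Q_def B_def ab by simp
  have e1: "Q * B/p + B/r = B/t + Q * B/(-s)"
    unfolding Qd by (rule gen_ids(1)[OF nz2 ht hu hv])
  have e2: "Q * B/p + B/r = B * (1-Q)/v"
    unfolding Qd by (rule gen_ids(2)[OF nz2 ht hu hv])
  have e3: "B/t - Q * B/p = B * (1-Q)/u"
    unfolding Qd by (rule gen_ids(3)[OF nz2 ht hu hv])
  have ms: "c - d = - s" unfolding s_def by simp
  have ns: "- s \<noteq> 0" using nz2 by simp
  have cB: "complex_of_real (\<beta>*(1-q)) = B * (1-Q)" unfolding B_def Q_def by simp
  show "sc \<alpha> (b-a) + sc \<beta> (c-b) = sc \<beta> (d-a) + sc \<alpha> (c-d)"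
    by (rule complex_cnj_cancel_iff[THEN iffD1])
       (simp only: complex_cnj_add cnj_sc nz2 ns not_False_eq_True A B_def[symmetric] e1 p_def[symmetric] r_def[symmetric] t_def[symmetric] ms)
  show "sc \<alpha> (b-a) + sc \<beta> (c-b) = sc (\<beta>*(1-q)) (d-b)"
    by (rule complex_cnj_cancel_iff[THEN iffD1]) (simp only: complex_cnj_add cnj_sc nz2 not_False_eq_True A cB B_def[symmetric] p_def[symmetric] r_def[symmetric] v_def[symmetric] e2)
  show "sc \<beta> (d-a) - sc \<alpha> (b-a) = sc (\<beta>*(1-q)) (c-a)"
    by (rule complex_cnj_cancel_iff[THEN iffD1]) (simp only: complex_cnj_diff cnj_sc nz2 not_False_eq_True A cB B_def[symmetric] p_def[symmetric] t_def[symmetric] u_def[symmetric] e3)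
qed




lemma indep:
  fixes x y :: complex
  assumes "Im (x * cnj y) \<noteq> 0" "s *\<^sub>R x = t *\<^sub>R y"
  shows "s = 0 \<and> t = 0"
proof -
  have "Im ((s *\<^sub>R x) * cnj y) = s * Im (x * cnj y)" by (simp add: scaleR_conv_of_real algebra_simps)
  moreover have "Im ((t *\<^sub>R y) * cnj y) = 0" by (simp add: scaleR_conv_of_real)
  ultimately have s: "s = 0" using assms by simp
  have "y \<noteq> 0" using assms(1) by auto
  then show ?thesis using s assms(2) by simp
qed

lemma sc_l: "z \<noteq> 0 \<Longrightarrow> sc (l * (cmod z)^2) z = l *\<^sub>R z"
  unfolding sc_def by simp

lemma dual_unique:
  fixes a b c d :: complex and l1 l2 l3 l4 m n q :: real
  assumes dist: "distinct [a,b,c,d]" and hq: "crc a b c d = complex_of_real q"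
    and nc1: "Im ((c-b) * cnj (d-b)) \<noteq> 0" and nc2: "Im ((d-a) * cnj (c-a)) \<noteq> 0"
    and E1: "l1 *\<^sub>R (b-a) + l2 *\<^sub>R (c-b) = l4 *\<^sub>R (d-a) + l3 *\<^sub>R (c-d)"
    and E2: "l1 *\<^sub>R (b-a) + l2 *\<^sub>R (c-b) = m *\<^sub>R (d-b)"
    and E3: "l4 *\<^sub>R (d-a) - l1 *\<^sub>R (b-a) = n *\<^sub>R (c-a)"
    and l1: "l1 \<noteq> 0"
  shows "l1 * (cmod (b-a))^2 = l3 * (cmod (c-d))^2"
    and "l2 * (cmod (c-b))^2 = l4 * (cmod (d-a))^2"
    and "q = (l1 * (cmod (b-a))^2) / (l4 * (cmod (d-a))^2)"
proof -
  have nz: "b - a \<noteq> 0" "c - b \<noteq> 0" "d - a \<noteq> 0" "c - d \<noteq> 0" "d - b \<noteq> 0" "c - a \<noteq> 0"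
    "b - c \<noteq> 0" "a - d \<noteq> 0" "a - b \<noteq> 0" "d - c \<noteq> 0" "b - d \<noteq> 0" "a - c \<noteq> 0"
    using dist by auto
  have q0: "q \<noteq> 0"
  proof
    assume "q = 0"
    then have "crc a b c d = 0" using hq by simp
    then show False using nz unfolding crc_def by simp
  qed
  define \<alpha> where "\<alpha> = l1 * (cmod (b-a))^2"
  define \<beta> where "\<beta> = \<alpha> / q"
  have ab: "\<alpha> = q * \<beta>" unfolding \<beta>_def using q0 by simp
  have a0: "\<alpha> \<noteq> 0" unfolding \<alpha>_def using l1 nz by simp
  note D = dual_identities[OF dist hq ab]
  define l2' where "l2' = \<beta> / (cmod (c-b))^2"
  define l3' where "l3' = \<alpha> / (cmod (c-d))^2"
  define l4' where "l4' = \<beta> / (cmod (d-a))^2"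
  define m' where "m' = \<beta>*(1-q) / (cmod (d-b))^2"
  define n' where "n' = \<beta>*(1-q) / (cmod (c-a))^2"
  have s1: "sc \<alpha> (b-a) = l1 *\<^sub>R (b-a)" unfolding \<alpha>_def using nz(1) by (rule sc_l)
  have s2: "sc \<beta> (c-b) = l2' *\<^sub>R (c-b)" unfolding sc_def l2'_def ..
  have s3: "sc \<alpha> (c-d) = l3' *\<^sub>R (c-d)" unfolding sc_def l3'_def ..
  have s4: "sc \<beta> (d-a) = l4' *\<^sub>R (d-a)" unfolding sc_def l4'_def ..
  have s5: "sc (\<beta>*(1-q)) (d-b) = m' *\<^sub>R (d-b)" unfolding sc_def m'_def ..
  have s6: "sc (\<beta>*(1-q)) (c-a) = n' *\<^sub>R (c-a)" unfolding sc_def n'_def ..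
  have e: "l2 *\<^sub>R (c-b) = m *\<^sub>R (d-b) - l1 *\<^sub>R (b-a)" using E2 by (metis add_diff_cancel_left')
  have e': "l2' *\<^sub>R (c-b) = m' *\<^sub>R (d-b) - l1 *\<^sub>R (b-a)" using D(2) unfolding s1 s2 s5 by (metis add_diff_cancel_left')
  have "(l2 - l2') *\<^sub>R (c-b) = (m - m') *\<^sub>R (d-b)"
    unfolding scaleR_diff_left e e' by simp
  then have L2: "l2 = l2'" using indep[OF nc1] by fastforce
  have g: "l4 *\<^sub>R (d-a) = n *\<^sub>R (c-a) + l1 *\<^sub>R (b-a)" using E3 by (metis diff_eq_eq)
  have g': "l4' *\<^sub>R (d-a) = n' *\<^sub>R (c-a) + l1 *\<^sub>R (b-a)" using D(3) unfolding s1 s4 s6 by (metis diff_eq_eq)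
  have "(l4 - l4') *\<^sub>R (d-a) = (n - n') *\<^sub>R (c-a)"
    unfolding scaleR_diff_left g g' by simp
  then have L4: "l4 = l4'" using indep[OF nc2] by fastforce
  have h: "l3 *\<^sub>R (c-d) = (l1 *\<^sub>R (b-a) + l2 *\<^sub>R (c-b)) - l4 *\<^sub>R (d-a)"
    using E1 by (metis add_diff_cancel_left')
  have h': "l3' *\<^sub>R (c-d) = (l1 *\<^sub>R (b-a) + l2' *\<^sub>R (c-b)) - l4' *\<^sub>R (d-a)"
    using D(1) unfolding s1 s2 s3 s4 by (metis add_diff_cancel_left')
  have "l3 *\<^sub>R (c-d) = l3' *\<^sub>R (c-d)"
    unfolding h h' L2 L4 ..
  then have L3: "l3 = l3'" using nz by simp
  have f3: "l3 * (cmod (c-d))^2 = \<alpha>" unfolding L3 l3'_def using nz by simp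
  have f2: "l2 * (cmod (c-b))^2 = \<beta>" unfolding L2 l2'_def using nz by simp
  have f4: "l4 * (cmod (d-a))^2 = \<beta>" unfolding L4 l4'_def using nz by simp
  show "l1 * (cmod (b-a))^2 = l3 * (cmod (c-d))^2" using f3 \<alpha>_def by simp
  show "l2 * (cmod (c-b))^2 = l4 * (cmod (d-a))^2" using f2 f4 by simp
  show "q = (l1 * (cmod (b-a))^2) / (l4 * (cmod (d-a))^2)"
    unfolding f4 \<alpha>_def[symmetric] \<beta>_def using q0 a0 by simp
qed




lemma coll_of:
  fixes x y z :: "'a::real_vector"
  assumes "x = y + t *\<^sub>R (z - y)"
  shows "collinear {x, y, z}"
proof -
  have "x = (1 - t) *\<^sub>R y + (1 - (1 - t)) *\<^sub>R z" using assms by (simp add: algebra_simps)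
  then have "collinear {y, x, z}" unfolding collinear_3_expand by blast
  then show ?thesis by (simp add: insert_commute)
qed

lemma coll_diff:
  fixes A B C :: "'a::real_vector"
  assumes "C - A = c *\<^sub>R (B - A)"
  shows "collinear {A, B, C}"
proof -
  have "collinear {C, A, B}" by (rule coll_of[of _ _ c]) (use assms in \<open>simp add: algebra_simps\<close>)
  then show ?thesis by (simp add: insert_commute)
qed

lemma plane_setup:
  fixes A B C D :: "'a::euclidean_space"
  assumes ad: "aff_dim {A,B,C,D} \<le> 2" and nc: "\<not> collinear {A,B,C}"
  obtains e1 e2 b c d where "orthn e1 e2" "B = A + Lm e1 e2 b" "C = A + Lm e1 e2 c" "D = A + Lm e1 e2 d"
proof -
  have AB: "A \<noteq> B" and AC: "A \<noteq> C" and BC: "B \<noteq> C" using nc by (auto simp: collinear_2 insert_commute)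
  define e1 where "e1 = (1 / norm (B - A)) *\<^sub>R (B - A)"
  define w where "w = (C - A) - inner (C - A) e1 *\<^sub>R e1"
  have n1: "norm e1 = 1" unfolding e1_def using AB by simp
  then have ne1: "inner e1 e1 = 1" by (simp add: norm_eq_1)
  have iw: "inner e1 w = 0" unfolding w_def using ne1 by (simp add: inner_diff_right inner_commute)
  have w0: "w \<noteq> 0"
  proof
    assume "w = 0"
    define k where "k = inner (C - A) e1"
    then have "C - A = k *\<^sub>R e1" using \<open>w = 0\<close> unfolding w_def by simp
    also have "\<dots> = (k / norm (B - A)) *\<^sub>R (B - A)" unfolding e1_def by simp
    finally have "C - A = (k / norm (B - A)) *\<^sub>R (B - A)" .
    then have "collinear {A, B, C}" by (rule coll_diff)
    then show False using nc by simp
  qed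
  define e2 where "e2 = (1 / norm w) *\<^sub>R w"
  have n2: "norm e2 = 1" unfolding e2_def using w0 by simp
  have on: "orthn e1 e2" unfolding orthn_def using ne1 n2 iw w0
    by (simp add: norm_eq_1 e2_def flip: power2_norm_eq_inner)
  define b where "b = Complex (norm (B - A)) 0"
  define c where "c = Complex (inner (C - A) e1) (norm w)"
  have hb: "B = A + Lm e1 e2 b" unfolding b_def Lm_def e1_def using AB by simp
  have hc: "C = A + Lm e1 e2 c" unfolding c_def Lm_def e2_def using w0 by (simp add: w_def)
  have "\<not> affine_dependent {A,B,C}" using nc collinear_3_eq_affine_dependent by blast
  then have "of_nat (card {A,B,C}) = aff_dim {A,B,C} + 1" by (rule aff_dim_affine_independent)
  moreover have "card {A,B,C} = 3" using AB AC BC by simp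
  ultimately have ad3: "aff_dim {A,B,C} = 2" by simp
  have "D \<in> affine hull {A,B,C}"
  proof (rule ccontr)
    assume "D \<notin> affine hull {A,B,C}"
    then have "aff_dim (insert D {A,B,C}) = 3" using ad3 by (simp add: aff_dim_insert)
    moreover have "insert D {A,B,C} = {A,B,C,D}" by auto
    ultimately show False using ad by simp
  qed
  then obtain u v t where uvt: "u + v + t = 1" "D = u *\<^sub>R A + v *\<^sub>R B + t *\<^sub>R C"
    unfolding affine_hull_3 by blast
  have "D = A + v *\<^sub>R (B - A) + t *\<^sub>R (C - A)"
  proof -
    have uu: "u = 1 - v - t" using uvt by simp
    show ?thesis using uvt(2) unfolding uu by (simp add: algebra_simps)
  qed
  also have "\<dots> = A + Lm e1 e2 (v *\<^sub>R b + t *\<^sub>R c)"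
    using hb hc by (simp add: Lm_add Lm_scaleR)
  finally have hd: "D = A + Lm e1 e2 (v *\<^sub>R b + t *\<^sub>R c)" .
  show ?thesis using that on hb hc hd by blast
qed

lemma affine_Lm: "affine (range (\<lambda>z. P + Lm e1 e2 z))"
  unfolding affine_def
proof (intro ballI allI impI)
  fix x y and u v :: real
  assume "x \<in> range (\<lambda>z. P + Lm e1 e2 z)" "y \<in> range (\<lambda>z. P + Lm e1 e2 z)" "u + v = 1"
  then obtain p q where pq: "x = P + Lm e1 e2 p" "y = P + Lm e1 e2 q" and uv: "u + v = 1" by blast
  have "u *\<^sub>R x + v *\<^sub>R y = (u + v) *\<^sub>R P + Lm e1 e2 (u *\<^sub>R p + v *\<^sub>R q)"
    unfolding pq by (simp add: Lm_add Lm_scaleR algebra_simps)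
  also have "\<dots> = P + Lm e1 e2 (u *\<^sub>R p + v *\<^sub>R q)" using uv by simp
  finally show "u *\<^sub>R x + v *\<^sub>R y \<in> range (\<lambda>z. P + Lm e1 e2 z)" by blast
qed

lemma par_get:
  assumes "parallel_vec x y" "y \<noteq> 0"
  shows "\<exists>l. x = l *\<^sub>R y"
proof -
  from assms(1) consider (a) c where "x = c *\<^sub>R y" | (b) c where "y = c *\<^sub>R x" unfolding parallel_vec_def by blast
  then show ?thesis
  proof cases
    case (b c)
    then have "c \<noteq> 0" using assms(2) by auto
    then have "x = (1/c) *\<^sub>R y" using b by simp
    then show ?thesis by blast
  qed blast
qed

lemma span2:
  fixes x y z :: complex
  assumes "Im (x * cnj y) \<noteq> 0"
  shows "\<exists>s t. z = s *\<^sub>R x + t *\<^sub>R y"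
proof -
  define D where "D = Im (x * cnj y)"
  have "D *\<^sub>R z = Im (z * cnj y) *\<^sub>R x + Im (x * cnj z) *\<^sub>R y"
    unfolding D_def by (simp add: complex_eq_iff algebra_simps)
  then have "z = (Im (z * cnj y) / D) *\<^sub>R x + (Im (x * cnj z) / D) *\<^sub>R y"
    using assms unfolding D_def[symmetric]
    by (metis (no_types, lifting) scaleR_add_right scaleR_scaleR divide_inverse_commute
        right_inverse scaleR_one mult.commute)
  then show ?thesis by blast
qed




lemma quad_cplx:
  fixes A B C D :: "'a::euclidean_space"
  assumes nd: "nondeg_planar_quad A B C D" and cc: "concircular A B C D"
  obtains e1 e2 b c d where "orthn e1 e2" "B = A + Lm e1 e2 b" "C = A + Lm e1 e2 c" "D = A + Lm e1 e2 d"
    "distinct [0,b,c,d]" "\<not> collinear {0,b,c}" "\<not> collinear {0,b,d}" "\<not> collinear {0,c,d}"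
    "\<not> collinear {b,c,d}" "Im (c * cnj (d - b)) \<noteq> 0"
    "crc 0 b c d = complex_of_real (cross_ratio A B C D)"
proof -
  from nd have ad: "aff_dim {A,B,C,D} \<le> 2" and dist: "distinct [A,B,C,D]"
    and n1: "\<not> collinear {A,B,C}" and n2: "\<not> collinear {A,B,D}"
    and n3: "\<not> collinear {A,C,D}" and n4: "\<not> collinear {B,C,D}"
    and P: "\<exists>P. P \<in> affine hull {A, C} \<and> P \<in> affine hull {B, D} \<and> P \<notin> {A, B, C, D}"
    unfolding nondeg_planar_quad_def by blast+
  obtain e1 e2 b c d where on: "orthn e1 e2" and hb: "B = A + Lm e1 e2 b"
    and hc: "C = A + Lm e1 e2 c" and hd: "D = A + Lm e1 e2 d"
    using plane_setup[OF ad n1] by blast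
  let ?L = "Lm e1 e2"
  have A0: "A = A + ?L 0" by simp
  have inj: "\<And>x y. A + ?L x = A + ?L y \<Longrightarrow> x = y" using Lm_inj[OF on] by simp
  have ds: "distinct [0,b,c,d]"
  proof -
    have "A + ?L 0 \<noteq> A + ?L b" "A + ?L 0 \<noteq> A + ?L c" "A + ?L 0 \<noteq> A + ?L d"
      "A + ?L b \<noteq> A + ?L c" "A + ?L b \<noteq> A + ?L d" "A + ?L c \<noteq> A + ?L d"
      using dist hb hc hd by auto
    then show ?thesis by auto
  qed
  have cl: "\<And>x y z. collinear {A + ?L x, A + ?L y, A + ?L z} = collinear {x, y, z}"
    using collinear_Lm[OF on] by blast
  have c1: "\<not> collinear {0,b,c}" using n1 cl[of 0 b c] hb hc by simp
  have c2: "\<not> collinear {0,b,d}" using n2 cl[of 0 b d] hb hd by simp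
  have c3: "\<not> collinear {0,c,d}" using n3 cl[of 0 c d] hc hd by simp
  have c4: "\<not> collinear {b,c,d}" using n4 cl[of b c d] hb hc hd by simp
  have diag: "Im (c * cnj (d - b)) \<noteq> 0"
  proof
    assume im: "Im (c * cnj (d - b)) = 0"
    obtain Q where Q1: "Q \<in> affine hull {A, C}" and Q2: "Q \<in> affine hull {B, D}" using P by blast
    from Q1 obtain u v where uv: "u + v = 1" "Q = u *\<^sub>R A + v *\<^sub>R C" unfolding affine_hull_2 by blast
    from Q2 obtain u' v' where uv': "u' + v' = 1" "Q = u' *\<^sub>R B + v' *\<^sub>R D" unfolding affine_hull_2 by blast
    have "Q = (u + v) *\<^sub>R A + ?L (v *\<^sub>R c)" using uv(2) hc by (simp add: Lm_scaleR algebra_simps)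
    then have q1: "Q = A + ?L (v *\<^sub>R c)" using uv(1) by simp
    have "Q = (u' + v') *\<^sub>R A + ?L (u' *\<^sub>R b + v' *\<^sub>R d)" using uv'(2) hb hd
      by (simp add: Lm_scaleR Lm_add algebra_simps)
    then have q2: "Q = A + ?L (u' *\<^sub>R b + v' *\<^sub>R d)" using uv'(1) by simp
    have e: "v *\<^sub>R c = u' *\<^sub>R b + v' *\<^sub>R d" using q1 q2 inj by metis
    have "c \<noteq> 0" "d - b \<noteq> 0" using ds by auto
    then obtain k where k: "d - b = k *\<^sub>R c" using im par_iff[of c "d - b"] by blast
    have "v *\<^sub>R c = (u' + v') *\<^sub>R b + (v' * k) *\<^sub>R c"
      using e k by (simp add: algebra_simps eq_diff_eq[symmetric])
    then have "b = (v - v' * k) *\<^sub>R c" using uv'(1) by (simp add: algebra_simps)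
    then have "collinear {0, b, c}" unfolding collinear_complex by (simp add: scaleR_conv_of_real)
    then show False using c1 by simp
  qed
  have cr: "crc 0 b c d = complex_of_real (cross_ratio A B C D)"
  proof -
    from cc obtain z where z: "z \<in> affine hull {A,B,C,D}" and dz: "dist z A = dist z B" "dist z A = dist z C"
      "dist z A = dist z D" unfolding concircular_def by blast
    have "affine hull {A,B,C,D} \<subseteq> range (\<lambda>z. A + ?L z)"
    proof (rule hull_minimal)
      show "{A,B,C,D} \<subseteq> range (\<lambda>z. A + ?L z)" using hb hc hd A0 by blast
      show "affine (range (\<lambda>z. A + ?L z))" by (rule affine_Lm)
    qed
    then obtain z0 where z0: "z = A + ?L z0" using z by blast
    define r where "r = dist z A"
    have dl: "\<And>x. dist z (A + ?L x) = cmod (x - z0)"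
      unfolding z0 Lm_dist[OF on] by (simp add: dist_norm norm_minus_commute)
    have r0: "cmod (0 - z0) = r" using dl[of 0] r_def by simp
    have rb: "cmod (b - z0) = r" using dl[of b] r_def dz hb by simp
    have rc: "cmod (c - z0) = r" using dl[of c] r_def dz hc by simp
    have rd: "cmod (d - z0) = r" using dl[of d] r_def dz hd by simp
    have re: "crc 0 b c d = complex_of_real (Re (crc 0 b c d))" by (rule crc_real[OF r0 rb rc rd ds])
    have "cross_ratio A B C D = Re (crc 0 b c d)"
    proof (rule cross_ratio_eq[of "\<lambda>z. A + ?L z" 0 _ b _ c _ d])
      show "\<And>z w. dist (A + ?L z) (A + ?L w) = dist z w" by (rule Lm_dist[OF on])
    qed (use hb hc hd re in auto)
    then show ?thesis using re by simp
  qed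
  show ?thesis using that on hb hc hd ds c1 c2 c3 c4 diag cr by blast
qed




lemma crc_nz: "distinct [a,b,c,d] \<Longrightarrow> crc a b c d \<noteq> 0"
  unfolding crc_def by auto

lemma crc_ne1:
  assumes "distinct [a,b,c,d]"
  shows "crc a b c d \<noteq> 1"
proof
  assume h: "crc a b c d = 1"
  have nz: "b - c \<noteq> 0" "d - a \<noteq> 0" using assms by auto
  have "(a-b)*(c-d) = (b-c)*(d-a)" using h nz unfolding crc_def by (simp add: field_simps)
  moreover have "(a-b)*(c-d) - (b-c)*(d-a) = (a-c)*(b-d)" by (simp add: algebra_simps)
  ultimately have "(a-c)*(b-d) = 0" by simp
  then show False using assms by auto
qed

lemma Im_scale: "Im ((r *\<^sub>R x) * cnj (s *\<^sub>R y)) = r * s * Im (x * cnj y)"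
  by (simp add: scaleR_conv_of_real algebra_simps)

lemma dual_nondeg:
  fixes b c d :: complex and \<alpha> \<beta> q :: real
  assumes ds: "distinct [0,b,c,d]" and hq: "crc 0 b c d = complex_of_real q" and ab: "\<alpha> = q * \<beta>"
    and b0: "\<beta> \<noteq> 0"
    and c1: "\<not> collinear {0,b,c}" and c2: "\<not> collinear {0,b,d}" and dg: "Im (c * cnj (d - b)) \<noteq> 0"
  defines "z1 \<equiv> sc \<alpha> b" and "z2 \<equiv> sc \<alpha> b + sc \<beta> (c - b)" and "z3 \<equiv> sc \<beta> d"
  shows "\<not> collinear {0, z1, z2}" "\<not> collinear {0, z1, z3}" "\<not> collinear {0, z2, z3}"
    "\<not> collinear {z1, z2, z3}" "Im ((z2 - 0) * cnj (z3 - z1)) \<noteq> 0"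
proof -
  note D = dual_identities[OF ds hq ab]
  have q0: "q \<noteq> 0" using crc_nz[OF ds] hq by auto
  have q1: "q \<noteq> 1" using crc_ne1[OF ds] hq by auto
  have nz: "b \<noteq> 0" "c \<noteq> 0" "d \<noteq> 0" "c - b \<noteq> 0" "d - b \<noteq> 0" using ds by auto
  define r1 where "r1 = \<alpha> / (cmod b)^2"
  define r2 where "r2 = \<beta> / (cmod (c - b))^2"
  define r4 where "r4 = \<beta> / (cmod d)^2"
  define r5 where "r5 = \<beta> * (1 - q) / (cmod (d - b))^2"
  define r6 where "r6 = \<beta> * (1 - q) / (cmod c)^2"
  have r: "r1 \<noteq> 0" "r2 \<noteq> 0" "r4 \<noteq> 0" "r5 \<noteq> 0" "r6 \<noteq> 0"
    unfolding r1_def r2_def r4_def r5_def r6_def using nz q0 q1 b0 ab by auto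
  have e1: "z1 = r1 *\<^sub>R b" unfolding z1_def r1_def sc_def ..
  have e2: "z2 = r5 *\<^sub>R (d - b)" unfolding z2_def r5_def using D(2) by (simp add: sc_def)
  have e3: "z3 = r4 *\<^sub>R d" unfolding z3_def r4_def sc_def ..
  have e21: "z2 - z1 = r2 *\<^sub>R (c - b)" unfolding z2_def z1_def r2_def sc_def by simp
  have e31: "z3 - z1 = r6 *\<^sub>R c" unfolding z3_def z1_def r6_def using D(3) by (simp add: sc_def)
  have ibd: "Im (b * cnj d) \<noteq> 0" using c2 unfolding collinear_complex by simp
  have ibc: "Im (b * cnj c) \<noteq> 0" using c1 unfolding collinear_complex by simp
  show "\<not> collinear {0, z1, z2}"
    unfolding collinear_complex using r ibd by (simp add: e1 e2 Im_scale algebra_simps)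
  show "\<not> collinear {0, z1, z3}"
    unfolding collinear_complex using r ibd by (simp add: e1 e3 Im_scale)
  show "\<not> collinear {0, z2, z3}"
    unfolding collinear_complex using r ibd by (simp add: e2 e3 Im_scale algebra_simps)
  show "\<not> collinear {z1, z2, z3}"
    unfolding collinear_complex using r ibc by (simp add: e21 e31 Im_scale algebra_simps)
  have "Im ((d - b) * cnj c) \<noteq> 0" using dg by (simp add: algebra_simps)
  then show "Im ((z2 - 0) * cnj (z3 - z1)) \<noteq> 0"
    using r by (simp only: diff_zero e2 e31 Im_scale) simp
qed




lemma nondeg_from_cplx:
  fixes P :: "'a::euclidean_space"
  assumes on: "orthn e1 e2"
    and n1: "\<not> collinear {z0, z1, z2}" and n2: "\<not> collinear {z0, z1, z3}"
    and n3: "\<not> collinear {z0, z2, z3}" and n4: "\<not> collinear {z1, z2, z3}"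
    and dg: "Im ((z2 - z0) * cnj (z3 - z1)) \<noteq> 0"
  shows "nondeg_planar_quad (P + Lm e1 e2 z0) (P + Lm e1 e2 z1) (P + Lm e1 e2 z2) (P + Lm e1 e2 z3)"
proof -
  let ?L = "Lm e1 e2"
  let ?A = "P + ?L z0" and ?B = "P + ?L z1" and ?C = "P + ?L z2" and ?D = "P + ?L z3"
  have cl: "\<And>x y z. collinear {P + ?L x, P + ?L y, P + ?L z} = collinear {x, y, z}"
    using collinear_Lm[OF on] by blast
  have inj: "\<And>x y. (P + ?L x = P + ?L y) = (x = y)" using Lm_inj[OF on] by auto
  have dz: "distinct [z0, z1, z2, z3]"
    using n1 n2 n3 n4 by (auto simp: collinear_2 insert_commute)
  have ds: "distinct [?A, ?B, ?C, ?D]" using dz inj by auto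
  have i12: "Im ((z1 - z0) * cnj (z2 - z0)) \<noteq> 0" using n1 unfolding collinear_complex .
  obtain s t where st: "z3 - z0 = s *\<^sub>R (z1 - z0) + t *\<^sub>R (z2 - z0)" using span2[OF i12] by blast
  have hD: "?D = (1 - s - t) *\<^sub>R ?A + s *\<^sub>R ?B + t *\<^sub>R ?C"
  proof -
    have "z3 = z0 + s *\<^sub>R (z1 - z0) + t *\<^sub>R (z2 - z0)" using st by (simp add: algebra_simps)
    then have "?L z3 = ?L z0 + s *\<^sub>R (?L z1 - ?L z0) + t *\<^sub>R (?L z2 - ?L z0)"
      by (simp add: Lm_add Lm_scaleR Lm_diff)
    then show ?thesis by (simp add: algebra_simps)
  qed
  have "?D \<in> affine hull {?A, ?B, ?C}" unfolding affine_hull_3 mem_Collect_eq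
    by (rule exI[of _ "1 - s - t"], rule exI[of _ s], rule exI[of _ t]) (simp add: hD)
  then have "aff_dim {?A, ?B, ?C, ?D} = aff_dim {?A, ?B, ?C}"
    using aff_dim_insert[of ?D "{?A, ?B, ?C}"] by (simp add: insert_commute)
  also have "\<dots> \<le> of_nat (card {?A, ?B, ?C}) - 1" by (rule aff_dim_le_card) simp
  also have "\<dots> \<le> 2" by (simp add: card_insert_if)
  finally have ad: "aff_dim {?A, ?B, ?C, ?D} \<le> 2" .
  have c1: "\<not> collinear {?A, ?B, ?C}" using cl n1 by simp
  have c2: "\<not> collinear {?A, ?B, ?D}" using cl n2 by simp
  have c3: "\<not> collinear {?A, ?C, ?D}" using cl n3 by simp
  have c4: "\<not> collinear {?B, ?C, ?D}" using cl n4 by simp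
  have i2: "Im ((z2 - z0) * cnj (z3 - z1)) \<noteq> 0" by (rule dg)
  obtain u v where uv: "z1 - z0 = u *\<^sub>R (z2 - z0) + v *\<^sub>R (z3 - z1)" using span2[OF i2] by blast
  define p where "p = z0 + u *\<^sub>R (z2 - z0)"
  have p2: "p = z1 + (- v) *\<^sub>R (z3 - z1)" unfolding p_def using uv by (simp add: algebra_simps)
  have Pp: "\<exists>Q. Q \<in> affine hull {?A, ?C} \<and> Q \<in> affine hull {?B, ?D} \<and> Q \<notin> {?A, ?B, ?C, ?D}"
  proof (intro exI conjI)
    have h1: "P + ?L p = (1 - u) *\<^sub>R ?A + u *\<^sub>R ?C"
      unfolding p_def by (simp add: Lm_add Lm_scaleR Lm_diff algebra_simps)
    show "P + ?L p \<in> affine hull {?A, ?C}" unfolding affine_hull_2 mem_Collect_eq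
      by (rule exI[of _ "1 - u"], rule exI[of _ u]) (simp add: h1)
    have h2: "P + ?L p = (1 + v) *\<^sub>R ?B + (- v) *\<^sub>R ?D"
      unfolding p2 by (simp add: Lm_add Lm_scaleR Lm_diff algebra_simps)
    show "P + ?L p \<in> affine hull {?B, ?D}" unfolding affine_hull_2 mem_Collect_eq
      by (rule exI[of _ "1 + v"], rule exI[of _ "-v"]) (simp add: h2)
    have "p \<noteq> z0"
    proof
      assume "p = z0"
      then have "collinear {z0, z1, z3}" using coll_of[of z0 z1 "-v" z3] p2 by simp
      then show False using n2 by simp
    qed
    moreover have "p \<noteq> z2"
    proof
      assume "p = z2"
      then have "collinear {z2, z1, z3}" using coll_of[of z2 z1 "-v" z3] p2 by simp
      then show False using n4 by (simp add: insert_commute)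
    qed
    moreover have "p \<noteq> z1"
    proof
      assume "p = z1"
      then have "collinear {z1, z0, z2}" using coll_of[of z1 z0 u z2] p_def by simp
      then show False using n1 by (simp add: insert_commute)
    qed
    moreover have "p \<noteq> z3"
    proof
      assume "p = z3"
      then have "collinear {z3, z0, z2}" using coll_of[of z3 z0 u z2] p_def by simp
      then show False using n3 by (simp add: insert_commute)
    qed
    ultimately show "P + ?L p \<notin> {?A, ?B, ?C, ?D}" using inj by auto
  qed
  show ?thesis unfolding nondeg_planar_quad_def using ad ds c1 c2 c3 c4 Pp by blast
qed

definition W :: "real \<Rightarrow> 'a::real_normed_vector \<Rightarrow> 'a \<Rightarrow> 'a" where
  "W r X Y = (r / (norm (Y - X))^2) *\<^sub>R (Y - X)"

lemma W_Lm:
  assumes "orthn e1 e2"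
  shows "W r (P + Lm e1 e2 x) (P + Lm e1 e2 y) = Lm e1 e2 (sc r (y - x))"
  unfolding W_def sc_def using Lm_norm[OF assms, of "y - x"] by (simp add: Lm_diff Lm_scaleR)




lemma quad_forward:
  fixes A B C D G0 G1 G2 G3 :: "'a::euclidean_space"
  assumes nd: "nondeg_planar_quad A B C D" and cc: "concircular A B C D"
    and du: "dual_quad A B C D G0 G1 G2 G3" and g01: "G0 \<noteq> G1"
  shows "inner (G1 - G0) (B - A) = inner (G2 - G3) (C - D)"
    and "inner (G2 - G1) (C - B) = inner (G3 - G0) (D - A)"
    and "cross_ratio A B C D = inner (G1 - G0) (B - A) / inner (G3 - G0) (D - A)"
proof -
  obtain e1 e2 b c d where on: "orthn e1 e2" and hb: "B = A + Lm e1 e2 b"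
    and hc: "C = A + Lm e1 e2 c" and hd: "D = A + Lm e1 e2 d"
    and ds: "distinct [0,b,c,d]" and c3: "\<not> collinear {0,c,d}" and c4: "\<not> collinear {b,c,d}"
    and cr: "crc 0 b c d = complex_of_real (cross_ratio A B C D)"
    using quad_cplx[OF nd cc] by metis
  let ?L = "Lm e1 e2"
  have BA: "B - A = ?L b" and CB: "C - B = ?L (c - b)" and DC: "D - C = ?L (d - c)"
    and AD: "A - D = ?L (- d)" and DB: "D - B = ?L (d - b)" and CA: "C - A = ?L c"
    using hb hc hd by (simp_all add: Lm_diff flip: Lm_diff[of e1 e2 0, simplified])
  have inj: "\<And>x y. ?L x = ?L y \<Longrightarrow> x = y" using Lm_inj[OF on] by blast
  have nzv: "?L b \<noteq> 0" "?L (c - b) \<noteq> 0" "?L (d - c) \<noteq> 0" "?L (- d) \<noteq> 0" "?L (d - b) \<noteq> 0" "?L c \<noteq> 0"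
  proof -
    have L0: "\<And>x. (?L x = 0) = (x = 0)" using inj[of _ 0] by auto
    show "?L b \<noteq> 0" "?L (c - b) \<noteq> 0" "?L (d - c) \<noteq> 0" "?L (- d) \<noteq> 0" "?L (d - b) \<noteq> 0" "?L c \<noteq> 0"
      using ds unfolding L0 by auto
  qed
  from du have p1: "parallel_vec (G1 - G0) (B - A)" and p2: "parallel_vec (G2 - G1) (C - B)"
    and p3: "parallel_vec (G3 - G2) (D - C)" and p4: "parallel_vec (G0 - G3) (A - D)"
    and p5: "parallel_vec (G2 - G0) (D - B)" and p6: "parallel_vec (G3 - G1) (C - A)"
    unfolding dual_quad_def by blast+
  obtain l1 where l1: "G1 - G0 = l1 *\<^sub>R (B - A)" using par_get[OF p1] nzv BA by auto
  obtain l2 where l2: "G2 - G1 = l2 *\<^sub>R (C - B)" using par_get[OF p2] nzv CB by auto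
  obtain k3 where k3: "G3 - G2 = k3 *\<^sub>R (D - C)" using par_get[OF p3] nzv DC by auto
  obtain k4 where k4: "G0 - G3 = k4 *\<^sub>R (A - D)" using par_get[OF p4] nzv AD by auto
  obtain m where m: "G2 - G0 = m *\<^sub>R (D - B)" using par_get[OF p5] nzv DB by auto
  obtain n where n: "G3 - G1 = n *\<^sub>R (C - A)" using par_get[OF p6] nzv CA by auto
  have l10: "l1 \<noteq> 0" using l1 g01 by auto
  have f1: "G1 - G0 = ?L (l1 *\<^sub>R b)" using l1 BA by (simp add: Lm_scaleR)
  have f2: "G2 - G1 = ?L (l2 *\<^sub>R (c - b))" using l2 CB by (simp add: Lm_scaleR)
  have f3: "G2 - G3 = ?L (k3 *\<^sub>R (c - d))"
  proof -
    have "G2 - G3 = - (G3 - G2)" by simp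
    also have "\<dots> = ?L (k3 *\<^sub>R (c - d))" unfolding k3 DC
      by (simp add: Lm_scaleR flip: Lm_diff) (simp add: Lm_diff algebra_simps)
    finally show ?thesis .
  qed
  have f4: "G3 - G0 = ?L (k4 *\<^sub>R d)"
  proof -
    have "G3 - G0 = - (G0 - G3)" by simp
    also have "\<dots> = ?L (k4 *\<^sub>R d)" unfolding k4 AD
      by (simp add: Lm_scaleR Lm_def algebra_simps)
    finally show ?thesis .
  qed
  have f5: "G2 - G0 = ?L (m *\<^sub>R (d - b))" using m DB by (simp add: Lm_scaleR)
  have f6: "G3 - G1 = ?L (n *\<^sub>R c)" using n CA by (simp add: Lm_scaleR)
  have E1: "l1 *\<^sub>R (b - 0) + l2 *\<^sub>R (c - b) = k4 *\<^sub>R (d - 0) + k3 *\<^sub>R (c - d)"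
  proof -
    have "?L (l1 *\<^sub>R b + l2 *\<^sub>R (c - b)) = (G1 - G0) + (G2 - G1)" unfolding f1 f2 Lm_add ..
    also have "\<dots> = (G3 - G0) + (G2 - G3)" by simp
    also have "\<dots> = ?L (k4 *\<^sub>R d + k3 *\<^sub>R (c - d))" unfolding f3 f4 Lm_add ..
    finally show ?thesis using inj by simp
  qed
  have E2: "l1 *\<^sub>R (b - 0) + l2 *\<^sub>R (c - b) = m *\<^sub>R (d - b)"
  proof -
    have "?L (l1 *\<^sub>R b + l2 *\<^sub>R (c - b)) = (G1 - G0) + (G2 - G1)" unfolding f1 f2 Lm_add ..
    also have "\<dots> = G2 - G0" by simp
    finally show ?thesis using inj f5 by simp
  qed
  have E3: "k4 *\<^sub>R (d - 0) - l1 *\<^sub>R (b - 0) = n *\<^sub>R (c - 0)"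
  proof -
    have "?L (k4 *\<^sub>R d - l1 *\<^sub>R b) = (G3 - G0) - (G1 - G0)" unfolding f4 f1 Lm_diff ..
    also have "\<dots> = G3 - G1" by simp
    finally show ?thesis using inj f6 by simp
  qed
  have nc1: "Im ((c - b) * cnj (d - b)) \<noteq> 0" using c4 unfolding collinear_complex .
  have nc2: "Im ((d - 0) * cnj (c - 0)) \<noteq> 0"
    using c3 collinear_complex[of 0 d c] by (simp add: insert_commute)
  note U = dual_unique[OF ds cr nc1 nc2 E1 E2 E3 l10]
  have nrm: "\<And>z. inner (?L z) (?L z) = (cmod z)^2"
    using Lm_norm[OF on] by (metis power2_norm_eq_inner)
  have i1: "inner (G1 - G0) (B - A) = l1 * (cmod b)^2" unfolding l1 BA using nrm by simp
  have i2: "inner (G2 - G1) (C - B) = l2 * (cmod (c - b))^2" unfolding l2 CB using nrm by simp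
  have i3: "inner (G2 - G3) (C - D) = k3 * (cmod (c - d))^2"
  proof -
    have "C - D = ?L (c - d)" using hc hd by (simp add: Lm_diff)
    then show ?thesis unfolding f3 using nrm by (simp add: Lm_scaleR)
  qed
  have i4: "inner (G3 - G0) (D - A) = k4 * (cmod d)^2"
  proof -
    have "D - A = ?L d" using hd by simp
    then show ?thesis unfolding f4 using nrm by (simp add: Lm_scaleR)
  qed
  show "inner (G1 - G0) (B - A) = inner (G2 - G3) (C - D)" using U(1) i1 i3 by simp
  show "inner (G2 - G1) (C - B) = inner (G3 - G0) (D - A)" using U(2) i2 i4 by simp
  show "cross_ratio A B C D = inner (G1 - G0) (B - A) / inner (G3 - G0) (D - A)" using U(3) i1 i4 by simp
qed




lemma quad_converse:
  fixes A B C D G0 :: "'a::euclidean_space" and \<alpha> \<beta> :: real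
  assumes nd: "nondeg_planar_quad A B C D" and cc: "concircular A B C D"
    and cr: "cross_ratio A B C D = \<alpha> / \<beta>"
  shows "G0 + W \<alpha> A B + W \<beta> B C = G0 + W \<beta> A D + W \<alpha> D C"
    and "dual_quad A B C D G0 (G0 + W \<alpha> A B) (G0 + W \<alpha> A B + W \<beta> B C) (G0 + W \<beta> A D)"
    and "nondeg_planar_quad G0 (G0 + W \<alpha> A B) (G0 + W \<alpha> A B + W \<beta> B C) (G0 + W \<beta> A D)"
proof -
  obtain e1 e2 b c d where on: "orthn e1 e2" and hb: "B = A + Lm e1 e2 b"
    and hc: "C = A + Lm e1 e2 c" and hd: "D = A + Lm e1 e2 d"
    and ds: "distinct [0,b,c,d]" and c1: "\<not> collinear {0,b,c}" and c2: "\<not> collinear {0,b,d}"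
    and dg: "Im (c * cnj (d - b)) \<noteq> 0"
    and crq: "crc 0 b c d = complex_of_real (cross_ratio A B C D)"
    using quad_cplx[OF nd cc] by metis
  let ?L = "Lm e1 e2"
  define q where "q = cross_ratio A B C D"
  have q0: "q \<noteq> 0" using crc_nz[OF ds] crq unfolding q_def by auto
  have b0: "\<beta> \<noteq> 0" using q0 cr unfolding q_def by auto
  have ab: "\<alpha> = q * \<beta>" using cr b0 unfolding q_def by simp
  have crq': "crc 0 b c d = complex_of_real q" using crq unfolding q_def .
  have wAB: "W \<alpha> A B = ?L (sc \<alpha> b)" using W_Lm[OF on, of \<alpha> A 0 b] hb by simp
  have wBC: "W \<beta> B C = ?L (sc \<beta> (c - b))" using W_Lm[OF on, of \<beta> A b c] hb hc by simp
  have wAD: "W \<beta> A D = ?L (sc \<beta> d)" using W_Lm[OF on, of \<beta> A 0 d] hd by simp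
  have wDC: "W \<alpha> D C = ?L (sc \<alpha> (c - d))" using W_Lm[OF on, of \<alpha> A d c] hd hc by simp
  note DI = dual_identities[OF ds crq' ab, simplified]
  show cl: "G0 + W \<alpha> A B + W \<beta> B C = G0 + W \<beta> A D + W \<alpha> D C"
    unfolding wAB wBC wAD wDC using DI(1) by (simp add: add.assoc flip: Lm_add)
  have DB: "D - B = ?L (d - b)" using hb hd by (simp add: Lm_diff)
  have CA: "C - A = ?L c" using hc by simp
  show "dual_quad A B C D G0 (G0 + W \<alpha> A B) (G0 + W \<alpha> A B + W \<beta> B C) (G0 + W \<beta> A D)"
    unfolding dual_quad_def
  proof (intro conjI)
    show "parallel_vec (G0 + W \<alpha> A B - G0) (B - A)" unfolding parallel_vec_def W_def by auto
    show "parallel_vec (G0 + W \<alpha> A B + W \<beta> B C - (G0 + W \<alpha> A B)) (C - B)"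
      unfolding parallel_vec_def W_def by auto
    have "G0 + W \<beta> A D - (G0 + W \<alpha> A B + W \<beta> B C) = - W \<alpha> D C" using cl by (simp add: algebra_simps)
    also have "\<dots> = (\<alpha> / (norm (C - D))^2) *\<^sub>R (D - C)" unfolding W_def by (simp add: algebra_simps)
    finally show "parallel_vec (G0 + W \<beta> A D - (G0 + W \<alpha> A B + W \<beta> B C)) (D - C)"
      unfolding parallel_vec_def by blast
    have "G0 - (G0 + W \<beta> A D) = (\<beta> / (norm (D - A))^2) *\<^sub>R (A - D)" unfolding W_def by (simp add: algebra_simps)
    then show "parallel_vec (G0 - (G0 + W \<beta> A D)) (A - D)" unfolding parallel_vec_def by blast
    have "G0 + W \<alpha> A B + W \<beta> B C - G0 = ?L (sc (\<beta> * (1 - q)) (d - b))"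
      unfolding wAB wBC using DI(2) by (simp flip: Lm_add)
    also have "\<dots> = (\<beta> * (1 - q) / (cmod (d - b))^2) *\<^sub>R (D - B)" unfolding DB sc_def Lm_scaleR ..
    finally show "parallel_vec (G0 + W \<alpha> A B + W \<beta> B C - G0) (D - B)" unfolding parallel_vec_def by blast
    have "G0 + W \<beta> A D - (G0 + W \<alpha> A B) = ?L (sc (\<beta> * (1 - q)) c)"
      unfolding wAB wAD using DI(3) by (simp flip: Lm_diff)
    also have "\<dots> = (\<beta> * (1 - q) / (cmod c)^2) *\<^sub>R (C - A)" unfolding CA sc_def Lm_scaleR ..
    finally show "parallel_vec (G0 + W \<beta> A D - (G0 + W \<alpha> A B)) (C - A)" unfolding parallel_vec_def by blast
  qed
  note N = dual_nondeg[OF ds crq' ab b0 c1 c2 dg]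
  have "nondeg_planar_quad (G0 + ?L 0) (G0 + ?L (sc \<alpha> b)) (G0 + ?L (sc \<alpha> b + sc \<beta> (c - b))) (G0 + ?L (sc \<beta> d))"
    by (rule nondeg_from_cplx[OF on N(1-4)]) (use N(5) in simp)
  then show "nondeg_planar_quad G0 (G0 + W \<alpha> A B) (G0 + W \<alpha> A B + W \<beta> B C) (G0 + W \<beta> A D)"
    unfolding wAB wBC wAD by (simp add: Lm_add add.assoc)
qed




lemma int_eq_incr:
  fixes F G :: "int \<Rightarrow> 'a::ab_group_add"
  assumes base: "F a = G a" and inc: "\<And>n. F (n + 1) - F n = G (n + 1) - G n"
  shows "F n = G n"
proof (induct n rule: int_induct[where k=a])
  case base then show ?case by (rule assms(1))
next
  case (step1 i)
  have "F (i + 1) = (F (i + 1) - F i) + F i" by simp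
  also have "\<dots> = (G (i + 1) - G i) + G i" using inc[of i] step1 by simp
  finally show ?case by (metis diff_add_cancel)
next
  case (step2 i)
  have "F (i - 1) = F i - (F (i - 1 + 1) - F (i - 1))" by simp
  also have "\<dots> = G i - (G (i - 1 + 1) - G (i - 1))" using inc[of "i - 1"] step2 by simp
  finally show ?case by simp
qed

definition Pot :: "(int \<Rightarrow> 'a::ab_group_add) \<Rightarrow> int \<Rightarrow> 'a" where
  "Pot \<phi> n = (if n \<ge> 0 then (\<Sum>k<nat n. \<phi> (int k)) else - (\<Sum>k<nat (-n). \<phi> (- int k - 1)))"

lemma Pot_0[simp]: "Pot \<phi> 0 = 0" unfolding Pot_def by simp

lemma Pot_step: "Pot \<phi> (n + 1) - Pot \<phi> n = \<phi> n"
proof (cases "n \<ge> 0")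
  case True
  then have "nat (n + 1) = Suc (nat n)" by simp
  then show ?thesis using True unfolding Pot_def by simp
next
  case False
  show ?thesis
  proof (cases "n = -1")
    case True then show ?thesis unfolding Pot_def by simp
  next
    case F2: False
    then have nn: "\<not> n + 1 \<ge> 0" using False by simp
    have "nat (- n) = Suc (nat (- (n + 1)))" using False by simp
    moreover have "- int (nat (- (n + 1))) - 1 = n" using nn by simp
    ultimately show ?thesis using False nn unfolding Pot_def by (simp add: algebra_simps)
  qed
qed

lemma shift_comm: "i \<noteq> j \<Longrightarrow> shift (shift u i) j = shift (shift u j) i"
  unfolding shift_def by (simp add: fun_upd_twist)

lemma shift_other[simp]: "i \<noteq> j \<Longrightarrow> shift u i j = u j"
  unfolding shift_def by simp

lemma shift_same[simp]: "shift u k k = u k + 1"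
  unfolding shift_def by simp

lemma shift_upd_same[simp]: "(shift u k)(k := t) = u(k := t)"
  unfolding shift_def by simp

lemma shift_upd_other: "i \<noteq> k \<Longrightarrow> (shift u i)(k := t) = shift (u(k := t)) i"
  unfolding shift_def by (simp add: fun_upd_twist)

lemma upd_shift_same: "u(k := t + 1) = shift (u(k := t)) k"
  unfolding shift_def by simp

lemma exact_form:
  fixes \<omega> :: "('m::finite \<Rightarrow> int) \<Rightarrow> 'm \<Rightarrow> 'a::ab_group_add"
  assumes cl: "\<And>u i j. i \<noteq> j \<Longrightarrow> \<omega> u i + \<omega> (shift u i) j = \<omega> u j + \<omega> (shift u j) i"
  shows "\<exists>g. \<forall>u i. g (shift u i) - g u = \<omega> u i"
proof -
  have "finite S \<Longrightarrow> \<exists>g. \<forall>u i. i \<in> S \<longrightarrow> g (shift u i) - g u = \<omega> u i" for S :: "'m set"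
  proof (induct S rule: finite_induct)
    case empty then show ?case by blast
  next
    case (insert k S)
    from insert obtain g where g: "\<And>u i. i \<in> S \<Longrightarrow> g (shift u i) - g u = \<omega> u i" by blast
    define h where "h u = Pot (\<lambda>t. \<omega> (u(k := t)) k) (u k)" for u
    define g' where "g' u = g (u(k := 0)) + h u" for u
    have "g' (shift u i) - g' u = \<omega> u i" if i: "i \<in> insert k S" for u i
    proof (cases "i = k")
      case True
      have "g' (shift u k) - g' u = h (shift u k) - h u" unfolding g'_def by simp
      also have "\<dots> = \<omega> u k" unfolding h_def using Pot_step[of "\<lambda>t. \<omega> (u(k := t)) k" "u k"] by simp
      finally show ?thesis using True by simp
    next
      case False
      then have iS: "i \<in> S" using i by simp
      have "g' (shift u i) - g' u = (g (shift (u(k := 0)) i) - g (u(k := 0))) + (h (shift u i) - h u)"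
        unfolding g'_def using shift_upd_other[OF False] by (simp add: algebra_simps)
      also have "\<dots> = \<omega> (u(k := 0)) i + (h (shift u i) - h u)" using g[OF iS] by simp
      also have "h (shift u i) - h u = \<omega> (u(k := u k)) i - \<omega> (u(k := 0)) i"
      proof -
        have eq: "Pot (\<lambda>t. \<omega> (shift (u(k := t)) i) k) n - Pot (\<lambda>t. \<omega> (u(k := t)) k) n
            = \<omega> (u(k := n)) i - \<omega> (u(k := 0)) i" for n
        proof (rule int_eq_incr[where a=0 and
              F="\<lambda>n. Pot (\<lambda>t. \<omega> (shift (u(k := t)) i) k) n - Pot (\<lambda>t. \<omega> (u(k := t)) k) n" and
              G="\<lambda>n. \<omega> (u(k := n)) i - \<omega> (u(k := 0)) i"])
          show "Pot (\<lambda>t. \<omega> (shift (u(k := t)) i) k) 0 - Pot (\<lambda>t. \<omega> (u(k := t)) k) 0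
            = \<omega> (u(k := 0)) i - \<omega> (u(k := 0)) i" by simp
          fix n
          have c: "\<omega> (u(k := n)) i + \<omega> (shift (u(k := n)) i) k = \<omega> (u(k := n)) k + \<omega> (shift (u(k := n)) k) i"
            using cl False by blast
          have p1: "Pot (\<lambda>t. \<omega> (shift (u(k := t)) i) k) (n + 1) - Pot (\<lambda>t. \<omega> (shift (u(k := t)) i) k) n
             = \<omega> (shift (u(k := n)) i) k" by (rule Pot_step)
          have p2: "Pot (\<lambda>t. \<omega> (u(k := t)) k) (n + 1) - Pot (\<lambda>t. \<omega> (u(k := t)) k) n = \<omega> (u(k := n)) k"
            by (rule Pot_step)
          define a' where "a' = Pot (\<lambda>t. \<omega> (shift (u(k := t)) i) k) (n + 1)"
          define a where "a = Pot (\<lambda>t. \<omega> (shift (u(k := t)) i) k) n"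
          define b' where "b' = Pot (\<lambda>t. \<omega> (u(k := t)) k) (n + 1)"
          define b where "b = Pot (\<lambda>t. \<omega> (u(k := t)) k) n"
          define X where "X = \<omega> (u(k := n)) i"
          define X' where "X' = \<omega> (shift (u(k := n)) k) i"
          define Y where "Y = \<omega> (shift (u(k := n)) i) k"
          define Z where "Z = \<omega> (u(k := n)) k"
          define Q where "Q = \<omega> (u(k := 0)) i"
          have c': "X + Y = Z + X'" using c unfolding X_def Y_def Z_def X'_def .
          have "(a' - b') - (a - b) = (a' - a) - (b' - b)" by (simp add: algebra_simps)
          also have "\<dots> = Y - Z" using p1 p2 unfolding a'_def a_def b'_def b_def Y_def Z_def by simp
          also have "\<dots> = (X + Y) - X - Z" by simp
          also have "\<dots> = (Z + X') - X - Z" using c' by simp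
          also have "\<dots> = (X' - Q) - (X - Q)" by (simp add: algebra_simps)
          finally show "(Pot (\<lambda>t. \<omega> (shift (u(k := t)) i) k) (n + 1) - Pot (\<lambda>t. \<omega> (u(k := t)) k) (n + 1)) -
                (Pot (\<lambda>t. \<omega> (shift (u(k := t)) i) k) n - Pot (\<lambda>t. \<omega> (u(k := t)) k) n) =
                (\<omega> (u(k := n + 1)) i - \<omega> (u(k := 0)) i) - (\<omega> (u(k := n)) i - \<omega> (u(k := 0)) i)"
            unfolding a'_def a_def b'_def b_def X'_def X_def Q_def upd_shift_same .
        qed
        have "h (shift u i) = Pot (\<lambda>t. \<omega> (shift (u(k := t)) i) k) (u k)"
          unfolding h_def using shift_upd_other[OF False] False by (simp add: eq_commute[of k i])
        then show ?thesis using eq[of "u k"] unfolding h_def by simp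
      qed
      finally have "g' (shift u i) - g' u = \<omega> (u(k := 0)) i + (\<omega> u i - \<omega> (u(k := 0)) i)"
        by (simp only: fun_upd_triv)
      then show ?thesis by (simp only: add.commute[of "\<omega> (u(k := 0)) i"] diff_add_cancel)
    qed
    then show ?case by blast
  qed
  from this[of UNIV] show ?thesis by simp
qed

lemma edge_label:
  fixes \<beta> :: "('m::finite \<Rightarrow> int) \<Rightarrow> 'm \<Rightarrow> real"
  assumes inv: "\<And>u i j. i \<noteq> j \<Longrightarrow> \<beta> (shift u j) i = \<beta> u i"
  shows "\<exists>\<alpha>. \<forall>u i. \<beta> u i = \<alpha> i (u i)"
proof -
  have one: "\<beta> (u(k := t)) i = \<beta> u i" if ik: "i \<noteq> k" for u i k t
  proof -
    have "\<beta> (u(k := t)) i = \<beta> (u(k := u k)) i"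
    proof (rule int_eq_incr[where F="\<lambda>t. \<beta> (u(k := t)) i" and G="\<lambda>t. \<beta> (u(k := u k)) i" and a="u k"])
      fix n
      show "\<beta> (u(k := n + 1)) i - \<beta> (u(k := n)) i = \<beta> (u(k := u k)) i - \<beta> (u(k := u k)) i"
        unfolding upd_shift_same using inv ik by simp
    qed simp
    then show ?thesis by simp
  qed
  have gen: "finite S \<Longrightarrow> \<forall>u v. (\<forall>k. k \<notin> S \<longrightarrow> u k = v k) \<longrightarrow> i \<notin> S \<longrightarrow> \<beta> u i = \<beta> v i"
    for S :: "'m set" and i
  proof (induct S rule: finite_induct)
    case empty then show ?case by (simp add: fun_eq_iff[symmetric])
  next
    case (insert k S)
    show ?case
    proof (intro allI impI)
      fix u v :: "'m \<Rightarrow> int"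
      assume agree: "\<forall>j. j \<notin> insert k S \<longrightarrow> u j = v j" and iS: "i \<notin> insert k S"
      have "\<beta> u i = \<beta> (u(k := v k)) i" using one[of i k u "v k"] iS by simp
      also have "\<dots> = \<beta> v i"
      proof -
        have "\<forall>j. j \<notin> S \<longrightarrow> (u(k := v k)) j = v j" using agree by auto
        moreover have "i \<notin> S" using iS by simp
        ultimately show ?thesis using insert(3) by blast
      qed
      finally show "\<beta> u i = \<beta> v i" .
    qed
  qed
  have all: "\<And>u v i. u i = v i \<Longrightarrow> \<beta> u i = \<beta> v i"
  proof -
    fix u v :: "'m \<Rightarrow> int" and i
    assume "u i = v i"
    have f: "finite (UNIV - {i})" by simp
    have a1: "\<forall>k. k \<notin> UNIV - {i} \<longrightarrow> u k = v k" using \<open>u i = v i\<close> by simp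
    have a2: "i \<notin> UNIV - {i}" by simp
    show "\<beta> u i = \<beta> v i" using gen[OF f, of i] a1 a2 by blast
  qed
  define \<alpha> where "\<alpha> i n = \<beta> ((\<lambda>_. 0)(i := n)) i" for i n
  have "\<forall>u i. \<beta> u i = \<alpha> i (u i)" unfolding \<alpha>_def by (intro allI all) simp
  then show ?thesis by blast
qed




theorem mainTheorem14:
  fixes f :: "('m::finite \<Rightarrow> int) \<Rightarrow> real ^ 'n"
  assumes "circular_net f"
  shows "isothermic_net f \<longleftrightarrow>
    (\<exists>\<alpha> :: 'm \<Rightarrow> int \<Rightarrow> real. \<forall>u i j. i \<noteq> j \<longrightarrow>
       cross_ratio (f u) (f (shift u i)) (f (shift (shift u i) j)) (f (shift u j))
         = \<alpha> i (u i) / \<alpha> j (u j))"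
proof -
  from assms have qf: "qnet f"
    and cf: "\<And>u i j. i \<noteq> j \<Longrightarrow> concircular (f u) (f (shift u i)) (f (shift (shift u i) j)) (f (shift u j))"
    unfolding circular_net_def by blast+
  have ndf: "\<And>u i j. i \<noteq> j \<Longrightarrow> nondeg_planar_quad (f u) (f (shift u i)) (f (shift (shift u i) j)) (f (shift u j))"
    using qf unfolding qnet_def by blast
  show ?thesis
  proof
    assume "isothermic_net f"
    then obtain g :: "('m \<Rightarrow> int) \<Rightarrow> real ^ 'n" where qg: "qnet g"
      and dg: "\<And>u i j. i \<noteq> j \<Longrightarrow> dual_quad (f u) (f (shift u i)) (f (shift (shift u i) j)) (f (shift u j))
                     (g u) (g (shift u i)) (g (shift (shift u i) j)) (g (shift u j))"
      unfolding isothermic_net_def koenigs_net_def by blast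
    define \<beta> where "\<beta> u i = inner (g (shift u i) - g u) (f (shift u i) - f u)" for u i
    have key: "\<beta> (shift u j) i = \<beta> u i \<and>
        cross_ratio (f u) (f (shift u i)) (f (shift (shift u i) j)) (f (shift u j)) = \<beta> u i / \<beta> u j"
      if ij: "i \<noteq> j" for u i j
    proof -
      have "nondeg_planar_quad (g u) (g (shift u i)) (g (shift (shift u i) j)) (g (shift u j))"
        using qg ij unfolding qnet_def by blast
      then have g01: "g u \<noteq> g (shift u i)" unfolding nondeg_planar_quad_def by simp
      note F = quad_forward[OF ndf[OF ij] cf[OF ij] dg[OF ij] g01]
      have sc: "shift (shift u j) i = shift (shift u i) j" using shift_comm ij by metis
      show ?thesis using F(1) F(3) unfolding \<beta>_def sc by simp
    qed
    have "\<exists>\<alpha>. \<forall>u i. \<beta> u i = \<alpha> i (u i)"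
      by (rule edge_label) (use key in auto)
    then obtain \<alpha> where a: "\<And>u i. \<beta> u i = \<alpha> i (u i)" by blast
    show "\<exists>\<alpha> :: 'm \<Rightarrow> int \<Rightarrow> real. \<forall>u i j. i \<noteq> j \<longrightarrow>
       cross_ratio (f u) (f (shift u i)) (f (shift (shift u i) j)) (f (shift u j))
         = \<alpha> i (u i) / \<alpha> j (u j)"
      using key a by metis
  next
    assume "\<exists>\<alpha> :: 'm \<Rightarrow> int \<Rightarrow> real. \<forall>u i j. i \<noteq> j \<longrightarrow>
       cross_ratio (f u) (f (shift u i)) (f (shift (shift u i) j)) (f (shift u j))
         = \<alpha> i (u i) / \<alpha> j (u j)"
    then obtain \<alpha> :: "'m \<Rightarrow> int \<Rightarrow> real" where ha: "\<And>u i j. i \<noteq> j \<Longrightarrow>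
       cross_ratio (f u) (f (shift u i)) (f (shift (shift u i) j)) (f (shift u j))
         = \<alpha> i (u i) / \<alpha> j (u j)" by blast
    define \<omega> where "\<omega> u i = W (\<alpha> i (u i)) (f u) (f (shift u i))" for u i
    have conv: "f (shift u j) + 0 = f (shift u j)" for u j by simp
    have cl: "\<omega> u i + \<omega> (shift u i) j = \<omega> u j + \<omega> (shift u j) i" if ij: "i \<noteq> j" for u i j
    proof -
      note C = quad_converse(1)[OF ndf[OF ij] cf[OF ij] ha[OF ij]]
      have sc: "shift (shift u j) i = shift (shift u i) j" using shift_comm ij by metis
      have e1: "\<omega> (shift u i) j = W (\<alpha> j (u j)) (f (shift u i)) (f (shift (shift u i) j))"
        unfolding \<omega>_def using ij by simp
      have e2: "\<omega> (shift u j) i = W (\<alpha> i (u i)) (f (shift u j)) (f (shift (shift u i) j))"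
        unfolding \<omega>_def sc using ij by simp
      have "W (\<alpha> i (u i)) (f u) (f (shift u i)) + W (\<alpha> j (u j)) (f (shift u i)) (f (shift (shift u i) j))
        = W (\<alpha> j (u j)) (f u) (f (shift u j)) + W (\<alpha> i (u i)) (f (shift u j)) (f (shift (shift u i) j))"
        using C[of 0] by simp
      then show ?thesis unfolding e1 e2 by (simp add: \<omega>_def)
    qed
    obtain g where g: "\<And>u i. g (shift u i) - g u = \<omega> u i" using exact_form[of \<omega>] cl by blast
    have gs: "\<And>u i. g (shift u i) = g u + \<omega> u i" using g by (metis add.commute diff_add_cancel)
    have quad: "dual_quad (f u) (f (shift u i)) (f (shift (shift u i) j)) (f (shift u j))
                     (g u) (g (shift u i)) (g (shift (shift u i) j)) (g (shift u j)) \<and>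
        nondeg_planar_quad (g u) (g (shift u i)) (g (shift (shift u i) j)) (g (shift u j))"
      if ij: "i \<noteq> j" for u i j
    proof -
      note C2 = quad_converse(2)[OF ndf[OF ij] cf[OF ij] ha[OF ij]]
      note C3 = quad_converse(3)[OF ndf[OF ij] cf[OF ij] ha[OF ij]]
      have h1: "g (shift u i) = g u + W (\<alpha> i (u i)) (f u) (f (shift u i))" using gs \<omega>_def by simp
      have h2: "g (shift (shift u i) j) = g u + W (\<alpha> i (u i)) (f u) (f (shift u i))
           + W (\<alpha> j (u j)) (f (shift u i)) (f (shift (shift u i) j))"
        using gs[of "shift u i" j] h1 ij by (simp add: \<omega>_def)
      have h3: "g (shift u j) = g u + W (\<alpha> j (u j)) (f u) (f (shift u j))" using gs \<omega>_def by simp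
      show ?thesis unfolding h1 h2 h3 using C2 C3 by blast
    qed
    have "qnet g" unfolding qnet_def using quad by blast
    moreover have "\<forall>u i j. i \<noteq> j \<longrightarrow> dual_quad (f u) (f (shift u i)) (f (shift (shift u i) j)) (f (shift u j))
                     (g u) (g (shift u i)) (g (shift (shift u i) j)) (g (shift u j))" using quad by blast
    ultimately have "koenigs_net f" unfolding koenigs_net_def using qf by blast
    then show "isothermic_net f" unfolding isothermic_net_def using assms by blast
  qed
qed


end
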